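(* Let $n\ge4$ and let $\eta$ be a homogeneous integrable 2-form of degree one on $\mathbb{C}^n$ with $d\eta\not\equiv0$. Then there exist linear coordinates $(x_1,\dots,x_n)$ on $\mathbb{C}^n$ such that $d\eta=dx_1\wedge dx_2\wedge dx_3$ and $\eta=\sum_{1\le i<j\le3}B_{ij}(x_1,x_2,x_3)\,dx_i\wedge dx_j$, where the $B_{ij}$ are linear forms depending only on $x_1,x_2,x_3$; more precisely $\eta=x_1\,dx_2\wedge dx_3+d\alpha$ with $\alpha=\sum_{j=1}^3A_j(x_1,x_2,x_3)\,dx_j$, $A_j$ homogeneous quadratic polynomials.
   Context: A form is homogeneous of degree $m$ if its coefficients (in linear coordinates) are homogeneous polynomials of degree $m$. A holomorphic $q$-form $\eta$ is integrable if every point $p$ outside its zero set has a neighborhood $V$ with holomorphic 1-forms $\omega_1,\dots,\omega_q$ on $V$ such that $\eta|_V=\omega_1\wedge\cdots\wedge\omega_q$ and $d\omega_j\wedge\eta=0$ for all $j$. *)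

theory Defs
  imports "HOL-Analysis.Analysis"
begin

text \<open>A k-form is represented by its evaluation: a function of the base point and
  k tangent vectors (alternating and multilinear in the tangent vectors).\<close>

text \<open>A homogeneous 2-form of degree one: eta = sum_{i<j} eta_ij dx_i ^ dx_j with
  eta_ij linear forms in x; evaluated, eta x u v = sum_{i,j} E_ij(x) u_i v_j with
  E antisymmetric, E_ij(x) = sum_k C i j k x_k.\<close>
definition form2_hom1 ::
  "(complex^'n \<Rightarrow> complex^'n \<Rightarrow> complex^'n \<Rightarrow> complex) \<Rightarrow> bool" where
  "form2_hom1 eta \<longleftrightarrow>
     (\<exists>C::'n \<Rightarrow> 'n \<Rightarrow> 'n \<Rightarrow> complex.
        (\<forall>i j k. C j i k = - C i j k) \<and>
        (\<forall>x u v. eta x u v =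
           (\<Sum>i\<in>UNIV. \<Sum>j\<in>UNIV. \<Sum>k\<in>UNIV. C i j k * x$k * u$i * v$j)))"

definition holo_on :: "(complex^'n) set \<Rightarrow> (complex^'n \<Rightarrow> complex) \<Rightarrow> bool" where
  "holo_on V f \<longleftrightarrow>
     (\<forall>x\<in>V. \<exists>D. (f has_derivative D) (at x) \<and> (\<forall>(c::complex) v. D (c *s v) = c * D v))"

definition one_form :: "('n \<Rightarrow> complex^'n \<Rightarrow> complex) \<Rightarrow> complex^'n \<Rightarrow> complex^'n \<Rightarrow> complex" where
  "one_form w x u = (\<Sum>i\<in>UNIV. w i x * u$i)"

definition ext_d1 ::
  "(complex^'n \<Rightarrow> complex^'n \<Rightarrow> complex) \<Rightarrow> complex^'n \<Rightarrow> complex^'n \<Rightarrow> complex^'n \<Rightarrow> complex" where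
  "ext_d1 F x u v =
     frechet_derivative (\<lambda>y. F y v) (at x) u - frechet_derivative (\<lambda>y. F y u) (at x) v"

definition ext_d2 ::
  "(complex^'n \<Rightarrow> complex^'n \<Rightarrow> complex^'n \<Rightarrow> complex) \<Rightarrow>
     complex^'n \<Rightarrow> complex^'n \<Rightarrow> complex^'n \<Rightarrow> complex^'n \<Rightarrow> complex" where
  "ext_d2 F x u v w =
     frechet_derivative (\<lambda>y. F y v w) (at x) u
   - frechet_derivative (\<lambda>y. F y u w) (at x) v
   + frechet_derivative (\<lambda>y. F y u v) (at x) w"

definition wedge11 ::
  "(complex^'n \<Rightarrow> complex^'n \<Rightarrow> complex) \<Rightarrow> (complex^'n \<Rightarrow> complex^'n \<Rightarrow> complex) \<Rightarrow>
     complex^'n \<Rightarrow> complex^'n \<Rightarrow> complex^'n \<Rightarrow> complex" where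
  "wedge11 a b x u v = a x u * b x v - a x v * b x u"

definition wedge22 ::
  "(complex^'n \<Rightarrow> complex^'n \<Rightarrow> complex^'n \<Rightarrow> complex) \<Rightarrow>
   (complex^'n \<Rightarrow> complex^'n \<Rightarrow> complex^'n \<Rightarrow> complex) \<Rightarrow>
     complex^'n \<Rightarrow> complex^'n \<Rightarrow> complex^'n \<Rightarrow> complex^'n \<Rightarrow> complex^'n \<Rightarrow> complex" where
  "wedge22 b e x u1 u2 u3 u4 =
       b x u1 u2 * e x u3 u4 - b x u1 u3 * e x u2 u4 + b x u1 u4 * e x u2 u3
     + b x u2 u3 * e x u1 u4 - b x u2 u4 * e x u1 u3 + b x u3 u4 * e x u1 u2"

definition wedge111 ::
  "(complex^'n \<Rightarrow> complex) \<Rightarrow> (complex^'n \<Rightarrow> complex) \<Rightarrow> (complex^'n \<Rightarrow> complex) \<Rightarrow>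
     complex^'n \<Rightarrow> complex^'n \<Rightarrow> complex^'n \<Rightarrow> complex" where
  "wedge111 a b c u v w =
       a u * b v * c w - a u * b w * c v - a v * b u * c w
     + a v * b w * c u + a w * b u * c v - a w * b v * c u"

definition integrable2 ::
  "(complex^'n \<Rightarrow> complex^'n \<Rightarrow> complex^'n \<Rightarrow> complex) \<Rightarrow> bool" where
  "integrable2 eta \<longleftrightarrow>
     (\<forall>p. (\<exists>u v. eta p u v \<noteq> 0) \<longrightarrow>
        (\<exists>V w1 w2. open V \<and> p \<in> V \<and>
           (\<forall>i. holo_on V (w1 i)) \<and> (\<forall>i. holo_on V (w2 i)) \<and>
           (\<forall>x\<in>V. \<forall>u v. eta x u v = wedge11 (one_form w1) (one_form w2) x u v) \<and>
           (\<forall>x\<in>V. \<forall>u1 u2 u3 u4. wedge22 (ext_d1 (one_form w1)) eta x u1 u2 u3 u4 = 0) \<and>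
           (\<forall>x\<in>V. \<forall>u1 u2 u3 u4. wedge22 (ext_d1 (one_form w2)) eta x u1 u2 u3 u4 = 0)))"

definition lincoord :: "complex^'n^'n \<Rightarrow> 'n \<Rightarrow> complex^'n \<Rightarrow> complex" where
  "lincoord P i x = (P *v x) $ i"

end

theory Submission
  imports Defs
begin


definition lf :: "complex^'n \<Rightarrow> complex^'n \<Rightarrow> complex" where
  "lf r x = (\<Sum>k\<in>UNIV. r$k * x$k)"

definition clin :: "(complex^'n \<Rightarrow> complex) \<Rightarrow> bool" where
  "clin f \<longleftrightarrow> (\<forall>u v. f (u+v) = f u + f v) \<and> (\<forall>c u. f (c *s u) = c * f u)"

lemma clin_lf: "clin (lf r)"
  unfolding clin_def lf_def by (simp add: distrib_left sum.distrib sum_distrib_left mult.left_commute)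

lemma clin_add: "clin f \<Longrightarrow> f (u+v) = f u + f v" by (simp add: clin_def)
lemma clin_scale: "clin f \<Longrightarrow> f (c *s u) = c * f u" by (simp add: clin_def)
lemma clin_zero: "clin f \<Longrightarrow> f 0 = 0"
  using clin_scale[of f 0 0] by simp
lemma clin_diff: "clin f \<Longrightarrow> f (u - v) = f u - f v"
proof -
  assume f: "clin f"
  have "u - v = u + (-1) *s v" by (simp add: vec_eq_iff)
  then have "f (u - v) = f (u + (-1) *s v)" by simp
  also have "\<dots> = f u - f v" by (simp only: clin_add[OF f] clin_scale[OF f]) simp
  finally show ?thesis .
qed
lemma clin_sum: assumes "clin f" "finite A" shows "f (\<Sum>i\<in>A. g i) = (\<Sum>i\<in>A. f (g i))"
  using assms(2) by (induction A rule: finite_induct) (auto simp: clin_zero clin_add assms(1))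

lemma clin_is_lf: "clin f \<Longrightarrow> f = lf (\<chi> k. f (axis k 1))"
proof
  fix x assume f: "clin f"
  have "f x = f (\<Sum>i\<in>UNIV. (x$i) *s axis i 1)" by (simp add: basis_expansion)
  also have "\<dots> = (\<Sum>i\<in>UNIV. x$i * f (axis i 1))" by (simp add: clin_sum[OF f] clin_scale[OF f])
  finally show "f x = lf (\<chi> k. f (axis k 1)) x" by (simp add: lf_def mult.commute)
qed

lemma scaleR_cvec: "scaleR (r::real) (x::complex^'n) = complex_of_real r *s x"
  by (auto simp: vec_eq_iff scaleR_conv_of_real[where 'a=complex])

lemma clin_bl: "clin f \<Longrightarrow> bounded_linear f"
  unfolding linear_conv_bounded_linear[symmetric]
  by (rule linearI) (simp_all add: clin_add clin_scale scaleR_cvec scaleR_conv_of_real)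

lemma clin_deriv: "clin f \<Longrightarrow> (f has_derivative f) F"
  by (simp add: bounded_linear_imp_has_derivative clin_bl)

lemma clin_fd: "clin f \<Longrightarrow> frechet_derivative f (at x) = f"
  using clin_deriv frechet_derivative_at by metis



definition w31 :: "('v \<Rightarrow> 'v \<Rightarrow> 'v \<Rightarrow> complex) \<Rightarrow> ('v \<Rightarrow> complex) \<Rightarrow> 'v \<Rightarrow> 'v \<Rightarrow> 'v \<Rightarrow> 'v \<Rightarrow> complex" where
  "w31 Om a u1 u2 u3 u4 = Om u1 u2 u3 * a u4 - Om u1 u2 u4 * a u3 + Om u1 u3 u4 * a u2 - Om u2 u3 u4 * a u1"

lemma alg1:
  fixes a b :: "'v \<Rightarrow> complex" and A1 A2 :: "'v \<Rightarrow> 'v \<Rightarrow> complex"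
  assumes et: "\<And>h v w. et h v w = (a v * A2 h w + A1 h v * b w) - (a w * A2 h v + A1 h w * b v)"
    and F: "\<And>u v. F u v = A1 u v - A1 v u" and E: "\<And>u v. E u v = a u * b v - a v * b u"
  shows "w31 (\<lambda>u v w. et u v w - et v u w + et w u v) a u1 u2 u3 u4 =
    - (F u1 u2 * E u3 u4 - F u1 u3 * E u2 u4 + F u1 u4 * E u2 u3
     + F u2 u3 * E u1 u4 - F u2 u4 * E u1 u3 + F u3 u4 * E u1 u2)"
  unfolding w31_def et F E by algebra

lemma alg2:
  fixes a b :: "'v \<Rightarrow> complex" and A1 A2 :: "'v \<Rightarrow> 'v \<Rightarrow> complex"
  assumes et: "\<And>h v w. et h v w = (a v * A2 h w + A1 h v * b w) - (a w * A2 h v + A1 h w * b v)"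
    and F: "\<And>u v. F u v = A2 u v - A2 v u" and E: "\<And>u v. E u v = a u * b v - a v * b u"
  shows "w31 (\<lambda>u v w. et u v w - et v u w + et w u v) b u1 u2 u3 u4 =
    - (F u1 u2 * E u3 u4 - F u1 u3 * E u2 u4 + F u1 u4 * E u2 u3
     + F u2 u3 * E u1 u4 - F u2 u4 * E u1 u3 + F u3 u4 * E u1 u2)"
  unfolding w31_def et F E by algebra



lemma form_props:
  assumes "form2_hom1 eta"
  shows "clin (\<lambda>x. eta x v w)" "clin (\<lambda>v. eta x v w)" "clin (\<lambda>w. eta x v w)"
    "eta x w v = - eta x v w"
proof -
  obtain C :: "'a \<Rightarrow> 'a \<Rightarrow> 'a \<Rightarrow> complex" where Ca: "\<And>i j k. C j i k = - C i j k"
    and e: "\<And>x u v. eta x u v = (\<Sum>i\<in>UNIV. \<Sum>j\<in>UNIV. \<Sum>k\<in>UNIV. C i j k * x$k * u$i * v$j)"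
    using assms unfolding form2_hom1_def by blast
  show "clin (\<lambda>x. eta x v w)" "clin (\<lambda>v. eta x v w)" "clin (\<lambda>w. eta x v w)"
    unfolding clin_def e by (simp_all add: sum.distrib sum_distrib_left distrib_left distrib_right mult_ac)
  have "eta x w v = (\<Sum>i\<in>UNIV. \<Sum>j\<in>UNIV. \<Sum>k\<in>UNIV. - (C j i k * x$k * v$j * w$i))"
  proof -
    have "C i j k * x$k * w$i * v$j = - (C j i k * x$k * v$j * w$i)" for i j k
      by (simp only: Ca[of j i k]) (simp add: mult_ac)
    then show ?thesis unfolding e by simp
  qed
  also have "\<dots> = - (\<Sum>j\<in>UNIV. \<Sum>i\<in>UNIV. \<Sum>k\<in>UNIV. C j i k * x$k * v$j * w$i)"
    by (simp add: sum_negf) (rule sum.swap)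
  also have "\<dots> = - eta x v w" unfolding e by simp
  finally show "eta x w v = - eta x v w" .
qed

lemma d2_eq:
  assumes "form2_hom1 eta"
  shows "ext_d2 eta x u v w = eta u v w - eta v u w + eta w u v"
  unfolding ext_d2_def using clin_fd[OF form_props(1)[OF assms]] by simp

lemma one_form_lf: "one_form w p = lf (\<chi> i. w i p)"
  by (simp add: one_form_def lf_def fun_eq_iff mult.commute)

definition Om :: "('v \<Rightarrow> 'v \<Rightarrow> 'v \<Rightarrow> complex) \<Rightarrow> 'v \<Rightarrow> 'v \<Rightarrow> 'v \<Rightarrow> complex" where
  "Om eta u v w = eta u v w - eta v u w + eta w u v"

lemma point:
  fixes eta :: "complex^'n \<Rightarrow> complex^'n \<Rightarrow> complex^'n \<Rightarrow> complex"
  assumes f: "form2_hom1 eta" and I: "integrable2 eta" and ne: "eta p u0 v0 \<noteq> 0"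
  shows "\<exists>a b. clin a \<and> clin b \<and> (\<forall>u v. eta p u v = a u * b v - a v * b u) \<and>
     (\<forall>u1 u2 u3 u4. w31 (Om eta) a u1 u2 u3 u4 = 0) \<and>
     (\<forall>u1 u2 u3 u4. w31 (Om eta) b u1 u2 u3 u4 = 0)"
proof -
  obtain V w1 w2 where V: "open V" "p \<in> V" and h1: "\<forall>i. holo_on V (w1 i)" and h2: "\<forall>i. holo_on V (w2 i)"
    and eq: "\<forall>x\<in>V. \<forall>u v. eta x u v = wedge11 (one_form w1) (one_form w2) x u v"
    and i1: "\<forall>x\<in>V. \<forall>u1 u2 u3 u4. wedge22 (ext_d1 (one_form w1)) eta x u1 u2 u3 u4 = 0"
    and i2: "\<forall>x\<in>V. \<forall>u1 u2 u3 u4. wedge22 (ext_d1 (one_form w2)) eta x u1 u2 u3 u4 = 0"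
  proof -
    have "\<exists>u v. eta p u v \<noteq> 0" using ne by blast
    then have "\<exists>V w1 w2. open V \<and> p \<in> V \<and>
           (\<forall>i. holo_on V (w1 i)) \<and> (\<forall>i. holo_on V (w2 i)) \<and>
           (\<forall>x\<in>V. \<forall>u v. eta x u v = wedge11 (one_form w1) (one_form w2) x u v) \<and>
           (\<forall>x\<in>V. \<forall>u1 u2 u3 u4. wedge22 (ext_d1 (one_form w1)) eta x u1 u2 u3 u4 = 0) \<and>
           (\<forall>x\<in>V. \<forall>u1 u2 u3 u4. wedge22 (ext_d1 (one_form w2)) eta x u1 u2 u3 u4 = 0)"
      by (rule mp[OF spec[OF I[unfolded integrable2_def], of p]])
    then show ?thesis using that by (elim exE conjE) (rule that)
  qed
  have "\<forall>i. \<exists>D. (w1 i has_derivative D) (at p)" using h1 V(2) unfolding holo_on_def by blast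
  then have "\<exists>D1. \<forall>i. (w1 i has_derivative D1 i) (at p)" by (rule choice)
  then obtain D1 where D1: "\<And>i. (w1 i has_derivative D1 i) (at p)" by blast
  have "\<forall>i. \<exists>D. (w2 i has_derivative D) (at p)" using h2 V(2) unfolding holo_on_def by blast
  then have "\<exists>D2. \<forall>i. (w2 i has_derivative D2 i) (at p)" by (rule choice)
  then obtain D2 where D2: "\<And>i. (w2 i has_derivative D2 i) (at p)" by blast
  define A1 where "A1 h v = (\<Sum>i\<in>UNIV. D1 i h * v$i)" for h v :: "complex^'n"
  define A2 where "A2 h v = (\<Sum>i\<in>UNIV. D2 i h * v$i)" for h v :: "complex^'n"
  define a where "a = one_form w1 p"
  define b where "b = one_form w2 p"
  have dA1: "((\<lambda>y. one_form w1 y v) has_derivative (\<lambda>h. A1 h v)) (at p)" for v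
    unfolding one_form_def A1_def by (intro has_derivative_sum has_derivative_mult_left D1)
  have dA2: "((\<lambda>y. one_form w2 y v) has_derivative (\<lambda>h. A2 h v)) (at p)" for v
    unfolding one_form_def A2_def by (intro has_derivative_sum has_derivative_mult_left D2)
  have fd1: "ext_d1 (one_form w1) p u v = A1 u v - A1 v u" for u v
    unfolding ext_d1_def frechet_derivative_at[OF dA1, symmetric] by simp
  have fd2: "ext_d1 (one_form w2) p u v = A2 u v - A2 v u" for u v
    unfolding ext_d1_def frechet_derivative_at[OF dA2, symmetric] by simp
  have et: "eta h v w = (a v * A2 h w + A1 h v * b w) - (a w * A2 h v + A1 h w * b v)" for h v w
  proof -
    have "((\<lambda>y. wedge11 (one_form w1) (one_form w2) y v w) has_derivative
       (\<lambda>h. (a v * A2 h w + A1 h v * b w) - (a w * A2 h v + A1 h w * b v))) (at p)"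
      unfolding wedge11_def a_def b_def
      by (intro has_derivative_diff has_derivative_mult dA1 dA2)
    then have "((\<lambda>y. eta y v w) has_derivative
       (\<lambda>h. (a v * A2 h w + A1 h v * b w) - (a w * A2 h v + A1 h w * b v))) (at p)"
      by (rule has_derivative_transform_within_open[OF _ V]) (use eq in auto)
    moreover have "((\<lambda>y. eta y v w) has_derivative (\<lambda>h. eta h v w)) (at p)"
      by (rule clin_deriv[OF form_props(1)[OF f]])
    ultimately have "(\<lambda>h. eta h v w) = (\<lambda>h. (a v * A2 h w + A1 h v * b w) - (a w * A2 h v + A1 h w * b v))"
      by (intro has_derivative_unique[of "\<lambda>y. eta y v w" _ p]) 
    then show ?thesis by (rule fun_cong)
  qed
  have ep: "eta p u v = a u * b v - a v * b u" for u v
    using eq V(2) by (simp add: wedge11_def a_def b_def)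
  show ?thesis
  proof (intro exI conjI allI)
    show "clin a" "clin b" unfolding a_def b_def one_form_lf by (rule clin_lf)+
    show "eta p u v = a u * b v - a v * b u" for u v by (rule ep)
    show "w31 (Om eta) a u1 u2 u3 u4 = 0" for u1 u2 u3 u4 unfolding Om_def[abs_def]
      using alg1[of eta a A2 A1 b "ext_d1 (one_form w1) p" "eta p", OF et fd1 ep] i1 V(2)
      unfolding wedge22_def by simp
    show "w31 (Om eta) b u1 u2 u3 u4 = 0" for u1 u2 u3 u4 unfolding Om_def[abs_def]
      using alg2[of eta a A2 A1 b "ext_d1 (one_form w2) p" "eta p", OF et fd2 ep] i2 V(2)
      unfolding wedge22_def by simp
  qed
qed




lemma stepA:
  fixes Om :: "complex^'n \<Rightarrow> complex^'n \<Rightarrow> complex^'n \<Rightarrow> complex"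
  assumes s12: "\<And>u v w. Om v u w = - Om u v w" and s23: "\<And>u v w. Om u w v = - Om u v w"
    and wa: "\<And>u1 u2 u3 u4. w31 Om a u1 u2 u3 u4 = 0"
    and wb: "\<And>u1 u2 u3 u4. w31 Om b u1 u2 u3 u4 = 0"
    and at: "a t = 1" and bt: "b t = 0" and as: "a s = 0" and bs: "b s = 1"
  shows "Om u v w = wedge111 a b (\<lambda>x. Om t s x) u v w"
proof -
  have c: "Om x t s = Om t s x" for x
    using s12[of t x s] s23[of t s x] by simp
  have g: "Om x y t = Om t s y * b x - Om t s x * b y" for x y
    using wb[of x y t s] bt bs c[of x] c[of y] unfolding w31_def by (simp add: algebra_simps)
  have e1: "Om u v w = Om u v t * a w - Om u w t * a v + Om v w t * a u"
    using wa[of u v w t] at unfolding w31_def by (simp add: algebra_simps)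
  show ?thesis unfolding e1 g wedge111_def by (simp add: algebra_simps)
qed

lemma stepB:
  fixes Om :: "complex^'n \<Rightarrow> complex^'n \<Rightarrow> complex^'n \<Rightarrow> complex"
  assumes Om: "\<And>u v w. Om u v w = wedge111 E1 E2 E3 u v w"
    and d: "E1 T1 = 1" "E1 T2 = 0" "E1 T3 = 0" "E2 T1 = 0" "E2 T2 = 1" "E2 T3 = 0"
        "E3 T1 = 0" "E3 T2 = 0" "E3 T3 = 1"
    and wa: "\<And>u1 u2 u3 u4. w31 Om a u1 u2 u3 u4 = 0"
  shows "a u = a T1 * E1 u + a T2 * E2 u + a T3 * E3 u"
  using wa[of T1 T2 T3 u] unfolding w31_def Om wedge111_def d by (simp add: algebra_simps)



lemma matrix_ext:
  fixes r :: "'n \<Rightarrow> 'a::field^'n" and S :: "'n set"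
  assumes ind: "\<And>c. (\<Sum>i\<in>S. c i *s r i) = 0 \<Longrightarrow> \<forall>i\<in>S. c i = 0"
  shows "\<exists>P::'a^'n^'n. invertible P \<and> (\<forall>i\<in>S. P$i = r i)"
proof -
  have fS: "finite S" by simp
  have inj: "inj_on r S"
  proof (rule inj_onI, rule ccontr)
    fix i j assume ij: "i \<in> S" "j \<in> S" "r i = r j" "i \<noteq> j"
    define c where "c k = (if k = i then 1 else if k = j then -1 else (0::'a))" for k
    have "(\<Sum>k\<in>S. c k *s r k) = (\<Sum>k\<in>S. (if k = i then r i else 0) - (if k = j then r j else 0))"
    proof (rule sum.cong[OF refl])
      fix k show "c k *s r k = (if k = i then r i else 0) - (if k = j then r j else 0)"
        using ij(4) by (cases "k = i"; cases "k = j") (simp_all add: c_def)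
    qed
    also have "\<dots> = r i - r j" using ij(1,2) by (simp add: sum_subtractf)
    also have "\<dots> = 0" using ij(3) by simp
    finally have "\<forall>k\<in>S. c k = 0" by (rule ind)
    then have "c i = 0" using ij(1) by blast
    then show False by (simp add: c_def)
  qed
  define B where "B = r ` S"
  have indB: "vec.independent B"
    unfolding vec.independent_explicit
  proof (intro conjI allI impI ballI)
    show "finite B" by (simp add: B_def)
  next
    fix u v assume u: "(\<Sum>v\<in>B. u v *s v) = 0" and v: "v \<in> B"
    have "(\<Sum>i\<in>S. u (r i) *s r i) = (\<Sum>v\<in>B. u v *s v)"
      unfolding B_def by (subst sum.reindex[OF inj]) (simp add: o_def)
    then have "(\<Sum>i\<in>S. u (r i) *s r i) = 0" using u by simp
    then have "\<forall>i\<in>S. u (r i) = 0" by (rule ind)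
    then show "u v = 0" using v by (auto simp: B_def)
  qed
  define E where "E = vec.extend_basis B"
  have BE: "B \<subseteq> E" and indE: "vec.independent E" and spE: "vec.span E = UNIV"
    using vec.extend_basis_superset[OF indB] vec.independent_extend_basis[OF indB]
      vec.span_extend_basis[OF indB] by (auto simp: E_def)
  have fE: "finite E" using indE vec.independent_bound_general by blast
  have cE: "card E = CARD('n)"
    using vec.basis_card_eq_dim[of E UNIV] indE spE vec_dim_card by auto
  have cB: "card B = card S" unfolding B_def using card_image[OF inj] .
  have "card (E - B) = card (UNIV - S)"
    using cE cB BE fE by (simp add: card_Diff_subset card_Diff_subset[of S UNIV] finite_subset)
  then obtain h where h: "bij_betw h (UNIV - S) (E - B)"
    using finite_same_card_bij[of "UNIV - S" "E - B"] fE by auto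
  define g where "g i = (if i \<in> S then r i else h i)" for i
  have gbij: "bij_betw g UNIV E"
  proof -
    have "bij_betw g S B" unfolding B_def g_def
      using inj by (simp add: bij_betw_def inj_on_def image_def) 
    moreover have "bij_betw g (UNIV - S) (E - B)"
      using h by (rule bij_betw_cong[THEN iffD1, rotated]) (simp add: g_def)
    ultimately have "bij_betw g (S \<union> (UNIV - S)) (B \<union> (E - B))"
      by (rule bij_betw_combine) simp
    moreover have "S \<union> (UNIV - S) = UNIV" "B \<union> (E - B) = E" using BE by auto
    ultimately show ?thesis by simp
  qed
  define P where "P = (\<chi> i. g i)"
  have rows: "\<forall>c. (\<Sum>i\<in>UNIV. c i *s row i P) = 0 \<longrightarrow> (\<forall>i. c i = 0)"
  proof (rule allI, rule impI)
    fix c assume c: "(\<Sum>i\<in>UNIV. c i *s row i P) = 0"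
    have ig: "inj g" using gbij by (simp add: bij_betw_def)
    define u where "u v = c (inv g v)" for v
    have "(\<Sum>v\<in>E. u v *s v) = (\<Sum>i\<in>UNIV. u (g i) *s g i)"
    proof -
      have "E = g ` UNIV" using gbij by (simp add: bij_betw_def)
      then show ?thesis by (simp add: sum.reindex[OF ig])
    qed
    also have "\<dots> = (\<Sum>i\<in>UNIV. c i *s row i P)"
      by (simp add: u_def ig P_def row_def)
    finally have "(\<Sum>v\<in>E. u v *s v) = 0" using c by simp
    then have "\<forall>v\<in>E. u v = 0" using indE unfolding vec.independent_explicit by blast
    then show "\<forall>i. c i = 0" using gbij ig by (auto simp: u_def bij_betw_def)
  qed
  then have "\<exists>B'. P ** B' = mat 1" using matrix_right_invertible_independent_rows by blast
  then have "invertible P" unfolding invertible_def using matrix_left_right_inverse by blast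
  moreover have "\<forall>i\<in>S. P$i = r i" by (simp add: P_def g_def)
  ultimately show ?thesis by blast
qed



lemma clin_comb: "clin f \<Longrightarrow> clin g \<Longrightarrow> clin h \<Longrightarrow> clin (\<lambda>x. f x - g x + h x)"
  unfolding clin_def by (simp add: algebra_simps)

lemma Om_alt:
  assumes f: "form2_hom1 eta"
  shows "Om eta v u w = - Om eta u v w" "Om eta u w v = - Om eta u v w"
proof -
  have h1: "eta w v u = - eta w u v" by (rule form_props(4)[OF f])
  have h2: "eta u w v = - eta u v w" by (rule form_props(4)[OF f])
  have h3: "eta v w u = - eta v u w" by (rule form_props(4)[OF f])
  show "Om eta v u w = - Om eta u v w" unfolding Om_def h1 by simp
  show "Om eta u w v = - Om eta u v w" unfolding Om_def h2 h3 by simp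
qed

lemma Om_lin3: "form2_hom1 eta \<Longrightarrow> clin (\<lambda>x. Om eta t s x)"
  unfolding Om_def by (intro clin_comb form_props)

lemma core:
  fixes eta :: "complex^'n \<Rightarrow> complex^'n \<Rightarrow> complex^'n \<Rightarrow> complex" and \<alpha> \<beta> \<gamma> :: 'n
  assumes f: "form2_hom1 eta" and I: "integrable2 eta"
    and nz: "\<exists>x u v w. ext_d2 eta x u v w \<noteq> 0"
    and dist: "\<alpha> \<noteq> \<beta>" "\<alpha> \<noteq> \<gamma>" "\<beta> \<noteq> \<gamma>"
  shows "\<exists>E T. (\<forall>k\<in>{\<alpha>,\<beta>,\<gamma>}. clin (E k)) \<and>
     (\<forall>i\<in>{\<alpha>,\<beta>,\<gamma>}. \<forall>j\<in>{\<alpha>,\<beta>,\<gamma>}. E i (T j) = (if i = j then 1 else 0)) \<and>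
     (\<forall>u v w. Om eta u v w = wedge111 (E \<alpha>) (E \<beta>) (E \<gamma>) u v w) \<and>
     (\<forall>x u v. eta x u v = (\<Sum>i\<in>{\<alpha>,\<beta>,\<gamma>}. \<Sum>j\<in>{\<alpha>,\<beta>,\<gamma>}.
          (\<Sum>k\<in>{\<alpha>,\<beta>,\<gamma>}. eta (T k) (T i) (T j) * E k x) * E i u * E j v))"
proof -
  obtain x0 u1 v1 w1 where "ext_d2 eta x0 u1 v1 w1 \<noteq> 0" using nz by blast
  then have OmNZ: "Om eta u1 v1 w1 \<noteq> 0" by (simp add: d2_eq[OF f] Om_def)
  have "\<exists>p u0 v0. eta p u0 v0 \<noteq> 0"
  proof (rule ccontr)
    assume "\<not> ?thesis" then have "\<And>p u v. eta p u v = 0" by blast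
    then show False using OmNZ by (simp add: Om_def)
  qed
  then obtain p u0 v0 where ne: "eta p u0 v0 \<noteq> 0" by blast
  from point[OF f I ne] obtain a b where la: "clin a" and lb: "clin b"
    and ep: "\<And>u v. eta p u v = a u * b v - a v * b u"
    and wa: "\<And>u1 u2 u3 u4. w31 (Om eta) a u1 u2 u3 u4 = 0"
    and wb: "\<And>u1 u2 u3 u4. w31 (Om eta) b u1 u2 u3 u4 = 0" by blast
  define d where "d = eta p u0 v0"
  have d: "d = a u0 * b v0 - a v0 * b u0" "d \<noteq> 0" using ep ne by (simp_all add: d_def)
  define t where "t = (b v0 / d) *s u0 - (b u0 / d) *s v0"
  define s where "s = (a u0 / d) *s v0 - (a v0 / d) *s u0"
  have at: "a t = 1" unfolding t_def clin_diff[OF la] clin_scale[OF la] using d by (simp add: field_simps)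
  have bt: "b t = 0" unfolding t_def clin_diff[OF lb] clin_scale[OF lb] by (simp add: field_simps)
  have as: "a s = 0" unfolding s_def clin_diff[OF la] clin_scale[OF la] by (simp add: field_simps)
  have bs: "b s = 1" unfolding s_def clin_diff[OF lb] clin_scale[OF lb] using d by (simp add: field_simps)
  define c where "c x = Om eta t s x" for x
  have lc: "clin c" unfolding c_def[abs_def] by (rule Om_lin3[OF f])
  have OmA: "Om eta u v w = wedge111 a b c u v w" for u v w
    unfolding c_def[abs_def] by (rule stepA[OF Om_alt[OF f] wa wb at bt as bs])
  have zz: "Om eta t t s = 0" using Om_alt(1)[OF f, of t t s] by simp
  have ct: "c t = 0" unfolding c_def using Om_alt(2)[OF f, of t s t] zz by simp
  have zz2: "Om eta t s s = 0" using Om_alt(2)[OF f, of t s s] by simp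
  have cs: "c s = 0" unfolding c_def using zz2 by simp
  obtain z where cz: "c z \<noteq> 0"
  proof (rule ccontr)
    assume "\<not> thesis" then have "\<And>z. c z = 0" using that by blast
    then show False using OmNZ unfolding OmA wedge111_def by simp
  qed
  define T3 where "T3 = (1 / c z) *s (z - a z *s t - b z *s s)"
  have aT3: "a T3 = 0" unfolding T3_def clin_diff[OF la] clin_scale[OF la] using at as by simp
  have bT3: "b T3 = 0" unfolding T3_def clin_diff[OF lb] clin_scale[OF lb] using bt bs by simp
  have cT3: "c T3 = 1" unfolding T3_def clin_diff[OF lc] clin_scale[OF lc] using ct cs cz by simp
  define E where "E k = (if k = \<alpha> then a else if k = \<beta> then b else c)" for k
  define T where "T k = (if k = \<alpha> then t else if k = \<beta> then s else T3)" for k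
  have Ea: "E \<alpha> = a" "E \<beta> = b" "E \<gamma> = c" using dist by (simp_all add: E_def)
  have Ta: "T \<alpha> = t" "T \<beta> = s" "T \<gamma> = T3" using dist by (simp_all add: T_def)
  note dfacts = at bt as bs ct cs aT3 bT3 cT3
  have sumS: "(\<Sum>k\<in>{\<alpha>,\<beta>,\<gamma>}. g k) = g \<alpha> + g \<beta> + g \<gamma>" for g :: "'n \<Rightarrow> complex"
    using dist by simp
  have lE: "\<forall>k\<in>{\<alpha>,\<beta>,\<gamma>}. clin (E k)" using la lb lc by (auto simp: Ea)
  have del: "\<forall>i\<in>{\<alpha>,\<beta>,\<gamma>}. \<forall>j\<in>{\<alpha>,\<beta>,\<gamma>}. E i (T j) = (if i = j then 1 else 0)"
    using dist by (auto simp: Ea Ta dfacts)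
  have OmE: "Om eta u v w = wedge111 (E \<alpha>) (E \<beta>) (E \<gamma>) u v w" for u v w
    unfolding Ea by (rule OmA)
  have repB: "eta x u v = (\<Sum>i\<in>{\<alpha>,\<beta>,\<gamma>}. \<Sum>j\<in>{\<alpha>,\<beta>,\<gamma>}. eta x (T i) (T j) * E i u * E j v)" for x u v
  proof (cases "\<exists>u v. eta x u v \<noteq> 0")
    case False then have "\<And>u v. eta x u v = 0" by blast
    then show ?thesis by simp
  next
    case True then obtain u' v' where "eta x u' v' \<noteq> 0" by blast
    from point[OF f I this] obtain a' b' 
      where ep': "\<And>u v. eta x u v = a' u * b' v - a' v * b' u"
      and wa': "\<And>u1 u2 u3 u4. w31 (Om eta) a' u1 u2 u3 u4 = 0"
      and wb': "\<And>u1 u2 u3 u4. w31 (Om eta) b' u1 u2 u3 u4 = 0" by blast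
    have spa: "a' w = a' t * a w + a' s * b w + a' T3 * c w" for w
      by (rule stepB[OF OmA dfacts(1) dfacts(3) aT3 dfacts(2) dfacts(4) bT3 ct cs cT3 wa'])
    have spb: "b' w = b' t * a w + b' s * b w + b' T3 * c w" for w
      by (rule stepB[OF OmA dfacts(1) dfacts(3) aT3 dfacts(2) dfacts(4) bT3 ct cs cT3 wb'])
    show ?thesis unfolding sumS Ea Ta ep' spa[of u] spa[of v] spb[of u] spb[of v]
      by (simp add: algebra_simps)
  qed
  have repC: "eta x (T i) (T j) = (\<Sum>k\<in>{\<alpha>,\<beta>,\<gamma>}. eta (T k) (T i) (T j) * E k x)"
    if ij: "i \<in> {\<alpha>,\<beta>,\<gamma>}" "j \<in> {\<alpha>,\<beta>,\<gamma>}" for x i j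
  proof -
    define y where "y = x - (\<Sum>k\<in>{\<alpha>,\<beta>,\<gamma>}. E k x *s T k)"
    have Ey: "E m y = 0" if m: "m \<in> {\<alpha>,\<beta>,\<gamma>}" for m
    proof -
      have lm: "clin (E m)" using lE m by blast
      have "E m y = E m x - (\<Sum>k\<in>{\<alpha>,\<beta>,\<gamma>}. E k x * E m (T k))"
        unfolding y_def by (simp add: clin_diff[OF lm] clin_sum[OF lm] clin_scale[OF lm])
      also have "\<dots> = 0" unfolding sumS using m dist by (auto simp: Ea Ta dfacts)
      finally show ?thesis .
    qed
    have e1: "eta (T i) y (T j) = 0" unfolding repB[of "T i" y "T j"] sumS by (simp add: Ey)
    have e2: "eta (T j) y (T i) = 0" unfolding repB[of "T j" y "T i"] sumS by (simp add: Ey)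
    have e3: "Om eta y (T i) (T j) = 0" unfolding OmE wedge111_def by (simp add: Ey)
    have ey: "eta y (T i) (T j) = 0" using e1 e2 e3 unfolding Om_def by simp
    have xy: "x = y + (\<Sum>k\<in>{\<alpha>,\<beta>,\<gamma>}. E k x *s T k)" unfolding y_def by simp
    have l1: "clin (\<lambda>x. eta x (T i) (T j))" by (rule form_props(1)[OF f])
    have "eta x (T i) (T j) = eta y (T i) (T j) + (\<Sum>k\<in>{\<alpha>,\<beta>,\<gamma>}. E k x * eta (T k) (T i) (T j))"
      by (subst xy) (simp add: clin_add[OF l1] clin_sum[OF l1] clin_scale[OF l1])
    then show ?thesis using ey by (simp add: mult.commute)
  qed
  have rep: "eta x u v = (\<Sum>i\<in>{\<alpha>,\<beta>,\<gamma>}. \<Sum>j\<in>{\<alpha>,\<beta>,\<gamma>}.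
          (\<Sum>k\<in>{\<alpha>,\<beta>,\<gamma>}. eta (T k) (T i) (T j) * E k x) * E i u * E j v)" for x u v
    unfolding repB[of x u v] by (intro sum.cong refl) (simp add: repC)
  show ?thesis using lE del OmE rep by blast
qed



lemma Qpart:
  fixes eta :: "complex^'n \<Rightarrow> complex^'n \<Rightarrow> complex^'n \<Rightarrow> complex" and \<alpha> \<beta> \<gamma> :: 'n
    and E :: "'n \<Rightarrow> complex^'n \<Rightarrow> complex" and T :: "'n \<Rightarrow> complex^'n"
  assumes dist: "\<alpha> \<noteq> \<beta>" "\<alpha> \<noteq> \<gamma>" "\<beta> \<noteq> \<gamma>"
    and lin: "\<And>k. clin (E k)"
    and del: "\<forall>i\<in>{\<alpha>,\<beta>,\<gamma>}. \<forall>j\<in>{\<alpha>,\<beta>,\<gamma>}. E i (T j) = (if i = j then 1 else 0)"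
    and OmE: "\<And>u v w. Om eta u v w = wedge111 (E \<alpha>) (E \<beta>) (E \<gamma>) u v w"
    and rep: "\<And>x u v. eta x u v = (\<Sum>i\<in>{\<alpha>,\<beta>,\<gamma>}. \<Sum>j\<in>{\<alpha>,\<beta>,\<gamma>}.
          (\<Sum>k\<in>{\<alpha>,\<beta>,\<gamma>}. eta (T k) (T i) (T j) * E k x) * E i u * E j v)"
    and anti: "\<And>x u v. eta x v u = - eta x u v"
  shows "\<exists>Q::'n\<Rightarrow>'n\<Rightarrow>'n\<Rightarrow>complex. \<forall>x u v. eta x u v =
        E \<alpha> x * (E \<beta> u * E \<gamma> v - E \<beta> v * E \<gamma> u)
        + ext_d1 (\<lambda>x' u'. \<Sum>j\<in>{\<alpha>,\<beta>,\<gamma>}.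
             (\<Sum>k\<in>{\<alpha>,\<beta>,\<gamma>}. \<Sum>l\<in>{\<alpha>,\<beta>,\<gamma>}. Q j k l * E k x' * E l x')
             * E j u') x u v"
proof -
  define g where "g x u v = E \<alpha> x * (E \<beta> u * E \<gamma> v - E \<beta> v * E \<gamma> u)" for x u v
  define bt where "bt x u v = eta x u v - g x u v" for x u v
  define bc where "bc k l j = bt (T k) (T l) (T j)" for k l j
  define R where "R x u v = (\<Sum>j\<in>{\<alpha>,\<beta>,\<gamma>}. \<Sum>k\<in>{\<alpha>,\<beta>,\<gamma>}. \<Sum>l\<in>{\<alpha>,\<beta>,\<gamma>}.
      bc k l j * E k x * E l u * E j v)" for x u v
  define Q where "Q j k l = bc k l j / 3" for j k l
  have d9: "E \<alpha> (T \<alpha>) = 1" "E \<alpha> (T \<beta>) = 0" "E \<alpha> (T \<gamma>) = 0"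
     "E \<beta> (T \<alpha>) = 0" "E \<beta> (T \<beta>) = 1" "E \<beta> (T \<gamma>) = 0"
     "E \<gamma> (T \<alpha>) = 0" "E \<gamma> (T \<beta>) = 0" "E \<gamma> (T \<gamma>) = 1"
    using del dist by auto
  have sumS: "(\<Sum>k\<in>{\<alpha>,\<beta>,\<gamma>}. h k) = h \<alpha> + h \<beta> + h \<gamma>" for h :: "'n \<Rightarrow> complex"
    using dist by simp
  have bR: "bt x u v = R x u v" for x u v
    unfolding bt_def R_def bc_def rep[of x u v] sumS g_def d9 by (simp add: algebra_simps)
  have hd: "((\<lambda>y. \<Sum>j\<in>{\<alpha>,\<beta>,\<gamma>}.
             (\<Sum>k\<in>{\<alpha>,\<beta>,\<gamma>}. \<Sum>l\<in>{\<alpha>,\<beta>,\<gamma>}. Q j k l * E k y * E l y) * E j v)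
      has_derivative (\<lambda>h. (R x h v + R h x v) / 3)) (at x)" for x v
  proof (rule has_derivative_eq_rhs)
    show "((\<lambda>y. \<Sum>j\<in>{\<alpha>,\<beta>,\<gamma>}.
             (\<Sum>k\<in>{\<alpha>,\<beta>,\<gamma>}. \<Sum>l\<in>{\<alpha>,\<beta>,\<gamma>}. Q j k l * E k y * E l y) * E j v)
      has_derivative (\<lambda>h. \<Sum>j\<in>{\<alpha>,\<beta>,\<gamma>}.
             (\<Sum>k\<in>{\<alpha>,\<beta>,\<gamma>}. \<Sum>l\<in>{\<alpha>,\<beta>,\<gamma>}. Q j k l * E k x * E l h + Q j k l * E k h * E l x) * E j v)) (at x)"
      by (intro has_derivative_sum has_derivative_mult_left has_derivative_mult has_derivative_mult_right clin_deriv lin)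
    show "(\<lambda>h. \<Sum>j\<in>{\<alpha>,\<beta>,\<gamma>}.
             (\<Sum>k\<in>{\<alpha>,\<beta>,\<gamma>}. \<Sum>l\<in>{\<alpha>,\<beta>,\<gamma>}. Q j k l * E k x * E l h + Q j k l * E k h * E l x) * E j v)
       = (\<lambda>h. (R x h v + R h x v) / 3)"
      unfolding fun_eq_iff R_def Q_def sumS by (simp add: field_simps)
  qed
  have ext: "ext_d1 (\<lambda>x' u'. \<Sum>j\<in>{\<alpha>,\<beta>,\<gamma>}.
             (\<Sum>k\<in>{\<alpha>,\<beta>,\<gamma>}. \<Sum>l\<in>{\<alpha>,\<beta>,\<gamma>}. Q j k l * E k x' * E l x')
             * E j u') x u v = (R x u v + R u x v) / 3 - (R x v u + R v x u) / 3" for x u v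
    unfolding ext_d1_def frechet_derivative_at[OF hd, symmetric] by simp
  have closed: "bt x u v - bt u x v + bt v x u = 0" for x u v
  proof -
    have "g x u v - g u x v + g v x u = wedge111 (E \<alpha>) (E \<beta>) (E \<gamma>) x u v"
      unfolding g_def wedge111_def by (simp add: algebra_simps)
    then show ?thesis using OmE[of x u v] unfolding bt_def Om_def by (simp add: algebra_simps)
  qed
  have bant: "bt x v u = - bt x u v" for x u v
    unfolding bt_def g_def anti[of x u v] by (simp add: algebra_simps)
  show ?thesis
  proof (intro exI allI)
    fix x u v
    have c1: "bt u x v - bt v x u = bt x u v" using closed[of x u v] by (simp add: algebra_simps)
    have "eta x u v = g x u v + bt x u v" by (simp add: bt_def)
    also have "bt x u v = (bt x u v + bt u x v) / 3 - (bt x v u + bt v x u) / 3"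
    proof -
      have "(bt x u v + bt u x v) - (bt x v u + bt v x u) = bt x u v + (bt u x v - bt v x u) - bt x v u"
        by (simp add: algebra_simps)
      also have "\<dots> = 3 * bt x u v" using c1 bant[of x u v] by simp
      finally have num: "(bt x u v + bt u x v) - (bt x v u + bt v x u) = 3 * bt x u v" .
      show ?thesis unfolding diff_divide_distrib[symmetric] num by simp
    qed
    finally show "eta x u v = E \<alpha> x * (E \<beta> u * E \<gamma> v - E \<beta> v * E \<gamma> u)
        + ext_d1 (\<lambda>x' u'. \<Sum>j\<in>{\<alpha>,\<beta>,\<gamma>}.
             (\<Sum>k\<in>{\<alpha>,\<beta>,\<gamma>}. \<Sum>l\<in>{\<alpha>,\<beta>,\<gamma>}. Q j k l * E k x' * E l x')
             * E j u') x u v"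
      unfolding ext bR[symmetric] g_def .
  qed
qed



lemma lf_comm: "lf r x = lf x r" by (simp add: lf_def mult.commute)

lemma lf_sum_left: "lf (\<Sum>i\<in>A. c i *s r i) x = (\<Sum>i\<in>A. c i * lf (r i) x)"
proof -
  have cl: "clin (\<lambda>r. lf r x)" unfolding lf_comm[of _ x] by (rule clin_lf)
  show ?thesis using clin_sum[OF cl, of A "\<lambda>i. c i *s r i"] clin_scale[OF cl]
    by (cases "finite A") (auto simp: lf_def)
qed

lemma lincoord_lf: "lincoord P k = lf (P$k)"
  by (simp add: fun_eq_iff lincoord_def lf_def matrix_vector_mult_def)

theorem mainTheorem12:
  fixes eta :: "complex^'n \<Rightarrow> complex^'n \<Rightarrow> complex^'n \<Rightarrow> complex"
  assumes "CARD('n) \<ge> 4"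
    and "form2_hom1 eta"
    and "integrable2 eta"
    and "\<exists>x u v w. ext_d2 eta x u v w \<noteq> 0"
  shows "\<exists>(P::complex^'n^'n) a b c.
     invertible P \<and> distinct [a, b, c] \<and>
     (\<forall>x u v w. ext_d2 eta x u v w =
        wedge111 (lincoord P a) (lincoord P b) (lincoord P c) u v w) \<and>
     (\<exists>B::'n \<Rightarrow> 'n \<Rightarrow> 'n \<Rightarrow> complex. \<forall>x u v. eta x u v =
        (\<Sum>i\<in>{a,b,c}. \<Sum>j\<in>{a,b,c}.
           (\<Sum>k\<in>{a,b,c}. B i j k * lincoord P k x) * lincoord P i u * lincoord P j v)) \<and>
     (\<exists>Q::'n \<Rightarrow> 'n \<Rightarrow> 'n \<Rightarrow> complex. \<forall>x u v. eta x u v =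
        lincoord P a x * (lincoord P b u * lincoord P c v - lincoord P b v * lincoord P c u)
        + ext_d1 (\<lambda>x' u'. \<Sum>j\<in>{a,b,c}.
             (\<Sum>k\<in>{a,b,c}. \<Sum>l\<in>{a,b,c}. Q j k l * lincoord P k x' * lincoord P l x')
             * lincoord P j u') x u v)"
proof -
  have "3 \<le> card (UNIV::'n set)" using assms(1) by simp
  then obtain A :: "'n set" where "A \<subseteq> UNIV" "card A = 3"
    using obtain_subset_with_card_n by blast
  then obtain \<alpha> \<beta> \<gamma> :: 'n where dist: "\<alpha> \<noteq> \<beta>" "\<alpha> \<noteq> \<gamma>" "\<beta> \<noteq> \<gamma>"
    unfolding card_3_iff by blast
  obtain E T where lE: "\<forall>k\<in>{\<alpha>,\<beta>,\<gamma>}. clin (E k)"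
    and del: "\<forall>i\<in>{\<alpha>,\<beta>,\<gamma>}. \<forall>j\<in>{\<alpha>,\<beta>,\<gamma>}. E i (T j) = (if i = j then 1 else 0)"
    and OmE: "\<forall>u v w. Om eta u v w = wedge111 (E \<alpha>) (E \<beta>) (E \<gamma>) u v w"
    and rep: "\<forall>x u v. eta x u v = (\<Sum>i\<in>{\<alpha>,\<beta>,\<gamma>}. \<Sum>j\<in>{\<alpha>,\<beta>,\<gamma>}.
          (\<Sum>k\<in>{\<alpha>,\<beta>,\<gamma>}. eta (T k) (T i) (T j) * E k x) * E i u * E j v)"
    using core[OF assms(2,3,4) dist] by blast
  define r where "r k = (\<chi> m. E k (axis m 1))" for k
  have Er: "E k = lf (r k)" if "k \<in> {\<alpha>,\<beta>,\<gamma>}" for k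
    unfolding r_def using clin_is_lf lE that by blast
  have ind: "\<forall>i\<in>{\<alpha>,\<beta>,\<gamma>}. c i = 0" if h: "(\<Sum>i\<in>{\<alpha>,\<beta>,\<gamma>}. c i *s r i) = 0" for c
  proof
    fix j assume j: "j \<in> {\<alpha>,\<beta>,\<gamma>}"
    have "0 = lf (\<Sum>i\<in>{\<alpha>,\<beta>,\<gamma>}. c i *s r i) (T j)" unfolding h by (simp add: lf_def)
    also have "\<dots> = (\<Sum>i\<in>{\<alpha>,\<beta>,\<gamma>}. c i * E i (T j))"
      unfolding lf_sum_left by (intro sum.cong refl) (simp add: Er)
    also have "\<dots> = (\<Sum>i\<in>{\<alpha>,\<beta>,\<gamma>}. if i = j then c i else 0)"
      by (intro sum.cong refl) (use del j in auto)
    also have "\<dots> = c j" using j by simp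
    finally show "c j = 0" by simp
  qed
  obtain P :: "complex^'n^'n" where Pinv: "invertible P" and Pr: "\<forall>i\<in>{\<alpha>,\<beta>,\<gamma>}. P$i = r i"
    using matrix_ext[of r "{\<alpha>,\<beta>,\<gamma>}"] ind by blast
  have LC: "E k = lincoord P k" if "k \<in> {\<alpha>,\<beta>,\<gamma>}" for k
  proof -
    have "P$k = r k" using that Pr by blast
    then show ?thesis using that by (simp add: lincoord_lf Er)
  qed
  have lin: "clin (lincoord P k)" for k unfolding lincoord_lf by (rule clin_lf)
  have del': "\<forall>i\<in>{\<alpha>,\<beta>,\<gamma>}. \<forall>j\<in>{\<alpha>,\<beta>,\<gamma>}. lincoord P i (T j) = (if i = j then 1 else 0)"
    using del LC by simp
  have LC3: "E \<alpha> = lincoord P \<alpha>" "E \<beta> = lincoord P \<beta>" "E \<gamma> = lincoord P \<gamma>" using LC by auto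
  have OmE': "Om eta u v w = wedge111 (lincoord P \<alpha>) (lincoord P \<beta>) (lincoord P \<gamma>) u v w" for u v w
    using OmE unfolding LC3 by blast
  have rep': "eta x u v = (\<Sum>i\<in>{\<alpha>,\<beta>,\<gamma>}. \<Sum>j\<in>{\<alpha>,\<beta>,\<gamma>}.
          (\<Sum>k\<in>{\<alpha>,\<beta>,\<gamma>}. eta (T k) (T i) (T j) * lincoord P k x) * lincoord P i u * lincoord P j v)" for x u v
    using rep[rule_format, of x u v] by (simp add: LC)
  have anti: "eta x v u = - eta x u v" for x u v by (rule form_props(4)[OF assms(2)])
  obtain Q where Q: "\<forall>x u v. eta x u v =
        lincoord P \<alpha> x * (lincoord P \<beta> u * lincoord P \<gamma> v - lincoord P \<beta> v * lincoord P \<gamma> u)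
        + ext_d1 (\<lambda>x' u'. \<Sum>j\<in>{\<alpha>,\<beta>,\<gamma>}.
             (\<Sum>k\<in>{\<alpha>,\<beta>,\<gamma>}. \<Sum>l\<in>{\<alpha>,\<beta>,\<gamma>}. Q j k l * lincoord P k x' * lincoord P l x')
             * lincoord P j u') x u v"
    using Qpart[of \<alpha> \<beta> \<gamma> "lincoord P" T eta, OF dist lin del' OmE' rep' anti] by blast
  show ?thesis
  proof (intro exI conjI)
    show "invertible P" by (rule Pinv)
    show "distinct [\<alpha>, \<beta>, \<gamma>]" using dist by simp
    show "\<forall>x u v w. ext_d2 eta x u v w =
        wedge111 (lincoord P \<alpha>) (lincoord P \<beta>) (lincoord P \<gamma>) u v w"
      using OmE' by (simp add: d2_eq[OF assms(2)] Om_def)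
    show "\<forall>x u v. eta x u v =
        (\<Sum>i\<in>{\<alpha>,\<beta>,\<gamma>}. \<Sum>j\<in>{\<alpha>,\<beta>,\<gamma>}.
           (\<Sum>k\<in>{\<alpha>,\<beta>,\<gamma>}. (\<lambda>i j k. eta (T k) (T i) (T j)) i j k * lincoord P k x) * lincoord P i u * lincoord P j v)"
      by (intro allI) (rule rep')
  qed (rule Q)
qed

end
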